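(* Let $x,y \in A$ be a regular exact pair of zero divisors. Furthermore, let $a \in A$ be weakly regular on the $A$-module $A/(x,y)$, and let $b \in A$ be any element. Then the $A$-submodule \[ Q_{\gamma_{ab},\gamma_a} = \big\{\, \psi \in \operatorname{M}_2(A) \,\big|\, \psi\gamma_{ab}=\gamma_a\xi \text{ for some } \xi \in \operatorname{M}_2(A) \,\big\} \] of $\operatorname{M}_2(A)$ is generated by the following five matrices: \[ \psi_1 = \begin{pmatrix} 0 & 0 \\ 0 & x \end{pmatrix},\ \psi_2 = \begin{pmatrix} 1 & 0 \\ 0 & b \end{pmatrix},\ \psi_3 = \begin{pmatrix} 0 & x \\ 0 & 0 \end{pmatrix},\ \psi_4 = \begin{pmatrix} a & 0 \\ y & 0 \end{pmatrix},\ \psi_5 = \begin{pmatrix} 0 & a \\ 0 & y \end{pmatrix}. \]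
   Context: $A$ is a commutative noetherian local ring. Two non-units $x,y\in A$ form an exact pair of zero divisors if $\operatorname{Ann}_A(x)=(y)$ and $\operatorname{Ann}_A(y)=(x)$; the pair is regular if moreover $(x)\cap(y)=0$ (equivalently, $x$ is regular on $A/(y)$, equivalently $y$ is regular on $A/(x)$). An element $a$ is weakly regular on an $A$-module $M$ if multiplication by $a$ on $M$ is injective. For $c\in A$, $\gamma_c$ is the $2\times 2$ matrix $\gamma_c=\begin{pmatrix} x & c\\ 0 & y\end{pmatrix}$, and $\operatorname{M}_2(A)$ denotes the $A$-module of $2\times 2$ matrices over $A$. *)

theory Defs
  imports "HOL-Analysis.Analysis"
begin

definition is_ideal :: "'a::comm_ring_1 set \<Rightarrow> bool" where
  "is_ideal I \<longleftrightarrow> 0 \<in> I \<and> (\<forall>u\<in>I. \<forall>v\<in>I. u + v \<in> I) \<and> (\<forall>r. \<forall>u\<in>I. r * u \<in> I)"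

definition ideal_gen :: "'a::comm_ring_1 set \<Rightarrow> 'a set" where
  "ideal_gen S = {\<Sum>s\<in>F. r s * s | F r. finite F \<and> F \<subseteq> S}"

definition noetherian_ring :: "'a::comm_ring_1 itself \<Rightarrow> bool" where
  "noetherian_ring _ \<longleftrightarrow> (\<forall>I::'a set. is_ideal I \<longrightarrow> (\<exists>F. finite F \<and> F \<subseteq> I \<and> I = ideal_gen F))"

text \<open>Local: nontrivial and the non-units are closed under addition (they then form the unique maximal ideal).\<close>
definition local_ring :: "'a::comm_ring_1 itself \<Rightarrow> bool" where
  "local_ring _ \<longleftrightarrow> (1::'a) \<noteq> 0 \<and>
     (\<forall>u v::'a. \<not> u dvd 1 \<longrightarrow> \<not> v dvd 1 \<longrightarrow> \<not> (u + v) dvd 1)"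

definition Ann :: "'a::comm_ring_1 \<Rightarrow> 'a set" where
  "Ann x = {z. z * x = 0}"

definition principal :: "'a::comm_ring_1 \<Rightarrow> 'a set" where
  "principal x = {x * r | r. True}"

definition exact_pair :: "'a::comm_ring_1 \<Rightarrow> 'a \<Rightarrow> bool" where
  "exact_pair x y \<longleftrightarrow> \<not> x dvd 1 \<and> \<not> y dvd 1 \<and> Ann x = principal y \<and> Ann y = principal x"

definition regular_exact_pair :: "'a::comm_ring_1 \<Rightarrow> 'a \<Rightarrow> bool" where
  "regular_exact_pair x y \<longleftrightarrow> exact_pair x y \<and> principal x \<inter> principal y = {0}"

definition weakly_regular_mod2 :: "'a::comm_ring_1 \<Rightarrow> 'a \<Rightarrow> 'a \<Rightarrow> bool" where
  "weakly_regular_mod2 a x y \<longleftrightarrow> (\<forall>z. a * z \<in> ideal_gen {x, y} \<longrightarrow> z \<in> ideal_gen {x, y})"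

text \<open>2x2 matrices over A as 'a^2^2; M $ i $ j is the (i,j) entry.\<close>
definition mat2 :: "'a::zero \<Rightarrow> 'a \<Rightarrow> 'a \<Rightarrow> 'a \<Rightarrow> 'a^2^2" where
  "mat2 p q r s = vector [vector [p, q], vector [r, s]]"

definition gamma :: "'a::comm_ring_1 \<Rightarrow> 'a \<Rightarrow> 'a \<Rightarrow> 'a^2^2" where
  "gamma x y c = mat2 x c 0 y"

definition mscale :: "'a::comm_ring_1 \<Rightarrow> 'a^2^2 \<Rightarrow> 'a^2^2" where
  "mscale c M = (\<chi> i j. c * M $ i $ j)"

end

theory Submission
  imports Defs
begin

lemma mat2_nth[simp]:
  "mat2 p q r s $ 1 $ 1 = p" "mat2 p q r s $ 1 $ 2 = q"
  "mat2 p q r s $ 2 $ 1 = r" "mat2 p q r s $ 2 $ 2 = s"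
  by (simp_all add: mat2_def)

lemma mat2_eta: "(M::'a::zero^2^2) = mat2 (M$1$1) (M$1$2) (M$2$1) (M$2$2)"
  by (simp add: vec_eq_iff forall_2)

lemma mat2_eq: "mat2 p q r s = mat2 p' q' r' s' \<longleftrightarrow> p = p' \<and> q = q' \<and> r = r' \<and> s = s'"
  by (auto simp add: vec_eq_iff forall_2)

lemma mat2_mult: "mat2 p q r s ** mat2 p2 q2 r2 s2 =
   mat2 (p*p2 + q*r2) (p*q2 + q * s2) (r*p2 + s * r2) (r*q2 + s * s2)"
  by (simp add: vec_eq_iff forall_2 matrix_matrix_mult_def sum_2)

lemma mat2_add: "mat2 p q r s + mat2 p2 q2 r2 s2 = mat2 (p+p2) (q+q2) (r+r2) (s+s2)"
  by (simp add: vec_eq_iff forall_2)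

lemma mat2_scale: "mscale c (mat2 p q r s) = mat2 (c*p) (c*q) (c*r) (c* s)"
  by (simp add: vec_eq_iff forall_2 mscale_def)

lemma ideal_gen2:
  fixes x y :: "'a::comm_ring_1"
  shows "z \<in> ideal_gen {x, y} \<longleftrightarrow> (\<exists>m n. z = x*m + y*n)"
proof
  assume "z \<in> ideal_gen {x, y}"
  then obtain F r where F: "finite F" "F \<subseteq> {x,y}" and z: "z = (\<Sum>s\<in>F. r s * s)"
    unfolding ideal_gen_def by blast
  have "\<exists>m n. (\<Sum>s\<in>F. r s * s) = x*m + y*n" using F(1,2)
  proof (induction F rule: finite_induct)
    case empty then show ?case by (intro exI[of _ 0]) simp
  next
    case (insert u F)
    then obtain m n where mn: "(\<Sum>s\<in>F. r s * s) = x*m + y*n" by auto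
    have "u = x \<or> u = y" using insert by auto
    then show ?case
    proof
      assume "u = x" then show ?thesis using insert mn
        by (intro exI[of _ "m + r u"] exI[of _ n]) (simp add: algebra_simps)
    next
      assume "u = y" then show ?thesis using insert mn
        by (intro exI[of _ m] exI[of _ "n + r u"]) (simp add: algebra_simps)
    qed
  qed
  then show "\<exists>m n. z = x*m + y*n" using z by simp
next
  assume "\<exists>m n. z = x*m + y*n"
  then obtain m n where z: "z = x*m + y*n" by blast
  show "z \<in> ideal_gen {x, y}"
  proof (cases "x = y")
    case True
    then show ?thesis unfolding ideal_gen_def using z
      by (intro CollectI exI[of _ "{x}"] exI[of _ "\<lambda>_. m + n"]) (simp add: algebra_simps)
  next
    case False
    then show ?thesis unfolding ideal_gen_def using z
      by (intro CollectI exI[of _ "{x,y}"] exI[of _ "\<lambda>s. if s = x then m else n"]) (simp add: algebra_simps)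
  qed
qed

theorem lemma7p6:
  fixes x y a b :: "'a::comm_ring_1"
  assumes "noetherian_ring TYPE('a)" and "local_ring TYPE('a)"
    and "regular_exact_pair x y"
    and "weakly_regular_mod2 a x y"
  shows "{\<psi>::'a^2^2. \<exists>\<xi>. \<psi> ** gamma x y (a * b) = gamma x y a ** \<xi>} =
         {mscale r1 (mat2 0 0 0 x) + mscale r2 (mat2 1 0 0 b) + mscale r3 (mat2 0 x 0 0)
          + mscale r4 (mat2 a 0 y 0) + mscale r5 (mat2 0 a 0 y) | r1 r2 r3 r4 r5. True}"
proof -
  have AnnX: "z * x = 0 \<longleftrightarrow> (\<exists>t. z = y * t)" for z
    using assms(3) unfolding regular_exact_pair_def exact_pair_def Ann_def principal_def
    by (auto simp: set_eq_iff)
  have AnnY: "z * y = 0 \<longleftrightarrow> (\<exists>t. z = x * t)" for z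
    using assms(3) unfolding regular_exact_pair_def exact_pair_def Ann_def principal_def
    by (auto simp: set_eq_iff)
  have inter: "x * u = y * v \<Longrightarrow> x * u = 0" for u v
    using assms(3) unfolding regular_exact_pair_def principal_def by blast
  have wr: "a * z = x*m + y*n \<Longrightarrow> \<exists>m' n'. z = x*m' + y*n'" for z m n
    using assms(4) unfolding weakly_regular_mod2_def ideal_gen2 by blast
  have key: "(\<exists>\<xi>. mat2 p q r s ** gamma x y (a * b) = gamma x y a ** \<xi>) \<longleftrightarrow>
    (\<exists>e11 e12 e21 e22. p*x = x*e11 + a*e21 \<and> p*(a*b) + q*y = x*e12 + a*e22
        \<and> r*x = y*e21 \<and> r*(a*b) + s*y = y*e22)" for p q r s
  proof
    assume "\<exists>\<xi>. mat2 p q r s ** gamma x y (a * b) = gamma x y a ** \<xi>"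
    then obtain \<xi> where "mat2 p q r s ** gamma x y (a * b) = gamma x y a ** \<xi>" by blast
    then have "mat2 p q r s ** gamma x y (a * b) = gamma x y a ** mat2 (\<xi>$1$1) (\<xi>$1$2) (\<xi>$2$1) (\<xi>$2$2)"
      using mat2_eta[of \<xi>] by simp
    then show "\<exists>e11 e12 e21 e22. p*x = x*e11 + a*e21 \<and> p*(a*b) + q*y = x*e12 + a*e22
        \<and> r*x = y*e21 \<and> r*(a*b) + s*y = y*e22"
      unfolding gamma_def mat2_mult mat2_eq by auto
  next
    assume "\<exists>e11 e12 e21 e22. p*x = x*e11 + a*e21 \<and> p*(a*b) + q*y = x*e12 + a*e22
        \<and> r*x = y*e21 \<and> r*(a*b) + s*y = y*e22"
    then obtain e11 e12 e21 e22 where "p*x = x*e11 + a*e21 \<and> p*(a*b) + q*y = x*e12 + a*e22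
        \<and> r*x = y*e21 \<and> r*(a*b) + s*y = y*e22" by blast
    then show "\<exists>\<xi>. mat2 p q r s ** gamma x y (a * b) = gamma x y a ** \<xi>"
      unfolding gamma_def mat2_mult mat2_eq
      by (intro exI[of _ "mat2 e11 e12 e21 e22"]) (simp add: mat2_mult mat2_eq)
  qed
  have rhs: "mscale r1 (mat2 0 0 0 x) + mscale r2 (mat2 1 0 0 b) + mscale r3 (mat2 0 x 0 0)
          + mscale r4 (mat2 a 0 y 0) + mscale r5 (mat2 0 a 0 y) =
          mat2 (r2 + r4*a) (r3*x + r5*a) (r4*y) (r1*x + r2*b + r5*y)" for r1 r2 r3 r4 r5
    by (simp add: mat2_scale mat2_add)
  show ?thesis
  proof (rule set_eqI, rule iffI)
    fix \<psi> :: "'a^2^2"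
    assume "\<psi> \<in> {\<psi>. \<exists>\<xi>. \<psi> ** gamma x y (a * b) = gamma x y a ** \<xi>}"
    then have "\<exists>\<xi>. mat2 (\<psi>$1$1) (\<psi>$1$2) (\<psi>$2$1) (\<psi>$2$2) ** gamma x y (a * b) = gamma x y a ** \<xi>"
      using mat2_eta[of \<psi>] by simp
    then obtain e11 e12 e21 e22 where
      E1: "\<psi>$1$1*x = x*e11 + a*e21" and E2: "\<psi>$1$1*(a*b) + \<psi>$1$2*y = x*e12 + a*e22"
      and E3: "\<psi>$2$1*x = y*e21" and E4: "\<psi>$2$1*(a*b) + \<psi>$2$2*y = y*e22"
      unfolding key by blast
    define p q r s where "p = \<psi>$1$1" "q = \<psi>$1$2" "r = \<psi>$2$1" "s = \<psi>$2$2"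
    note E = E1 E2 E3 E4[folded p_q_r_s_def]
    have "x * r = y * e21" using E3 p_q_r_s_def by (simp add: mult.commute)
    then have "r * x = 0" using inter by (simp add: mult.commute)
    then obtain t where t: "r = y * t" using AnnX by blast
    have "(t*(a*b) + s - e22) * y = 0" using E4 t p_q_r_s_def by (simp add: algebra_simps)
    then obtain w where w: "t*(a*b) + s - e22 = x * w" using AnnY by blast
    have e22: "e22 = t*(a*b) + s - x * w" using w by (simp add: algebra_simps)
    have E2': "p*(a*b) + q*y = x*e12 + a*e22" using E2 p_q_r_s_def by simp
    have "a * ((p - t*a)*b - s) = x*(e12 - a*w) + y*(-q)"
      using E2' unfolding e22 by (simp add: algebra_simps)
    then obtain m n where mn: "(p - t*a)*b - s = x*m + y*n" using wr by blast
    have "y*(q + a*n) = x*(e12 - a*w - a*m)"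
      using E2' mn unfolding e22 by (simp add: algebra_simps)
    then have "x*(e12 - a*w - a*m) = y*(q + a*n)" by simp
    then have "x*(e12 - a*w - a*m) = 0" using inter by blast
    then have "(q + a*n) * y = 0" using \<open>y*(q + a*n) = x*(e12 - a*w - a*m)\<close> by (simp add: mult.commute)
    then obtain k where k: "q + a*n = x * k" using AnnY by blast
    have "\<psi> = mat2 ((p - t*a) + t*a) (k*x + (-n)*a) (t*y) ((-m)*x + (p - t*a)*b + (-n)*y)"
    proof -
      have 1: "p = (p - t*a) + t*a" by simp
      have 2: "q = k*x + (-n)*a" using k by (simp add: algebra_simps)
      have 3: "r = t*y" using t by (simp add: mult.commute)
      have 4: "s = (-m)*x + (p - t*a)*b + (-n)*y" using mn by (simp add: algebra_simps)
      show ?thesis using mat2_eta[of \<psi>] p_q_r_s_def 1 2 3 4 by metis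
    qed
    then show "\<psi> \<in> {mscale r1 (mat2 0 0 0 x) + mscale r2 (mat2 1 0 0 b) + mscale r3 (mat2 0 x 0 0)
          + mscale r4 (mat2 a 0 y 0) + mscale r5 (mat2 0 a 0 y) | r1 r2 r3 r4 r5. True}"
      unfolding rhs by blast
  next
    fix \<psi> :: "'a^2^2"
    assume "\<psi> \<in> {mscale r1 (mat2 0 0 0 x) + mscale r2 (mat2 1 0 0 b) + mscale r3 (mat2 0 x 0 0)
          + mscale r4 (mat2 a 0 y 0) + mscale r5 (mat2 0 a 0 y) | r1 r2 r3 r4 r5. True}"
    then obtain r1 r2 r3 r4 r5 where
      "\<psi> = mat2 (r2 + r4*a) (r3*x + r5*a) (r4*y) (r1*x + r2*b + r5*y)" using rhs by blast
    moreover have "\<exists>\<xi>. mat2 (r2 + r4*a) (r3*x + r5*a) (r4*y) (r1*x + r2*b + r5*y) ** gamma x y (a * b) = gamma x y a ** \<xi>"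
      unfolding key
      by (intro exI[of _ r2] exI[of _ "r3*y - r1*a"] exI[of _ "r4*x"] exI[of _ "r1*x + r2*b + r4*a*b + r5*y"])
        (simp add: algebra_simps)
    ultimately show "\<psi> \<in> {\<psi>. \<exists>\<xi>. \<psi> ** gamma x y (a * b) = gamma x y a ** \<xi>}" by simp
  qed
qed

end
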